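(* For every $k \in \mathbb{N}$, there exists a digraph $G_k$ with $\kappa'(G_k) \ge k$ such that $G_k$ contains no subdivision of $\overleftrightarrow{K}_4$.
   Context: Digraphs are finite, loopless, have no parallel arcs, but may contain digons. $\kappa'(D)$ is the strong arc-connectivity: $D$ is strongly $k$-arc-connected if $D-E$ is strongly connected for every set $E$ of at most $k-1$ arcs, and $\kappa'(D)$ is the largest such $k$. $\overleftrightarrow{K}_4$ is the bioriented complete graph on four vertices (both arcs $(u,v),(v,u)$ for every pair of distinct vertices). A subdivision of a digraph $F$ is obtained by replacing each arc $(x,y)$ by a directed $x$-$y$-path, with paths for different arcs internally vertex-disjoint. *)

theory Defs
  imports Main
begin

text \<open>A digraph is a pair (V, A): finite vertex set, arc set A \<subseteq> V \<times> V, loopless.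
  Parallel arcs are impossible since A is a set; digons (both (u,v),(v,u)) are allowed.\<close>
definition digraph :: "'a set \<Rightarrow> ('a \<times> 'a) set \<Rightarrow> bool" where
  "digraph V A \<longleftrightarrow> finite V \<and> A \<subseteq> V \<times> V \<and> (\<forall>v. (v, v) \<notin> A)"

definition strongly_connected :: "'a set \<Rightarrow> ('a \<times> 'a) set \<Rightarrow> bool" where
  "strongly_connected V A \<longleftrightarrow> (\<forall>u\<in>V. \<forall>v\<in>V. (u, v) \<in> A\<^sup>*)"

definition strongly_k_arc_connected :: "'a set \<Rightarrow> ('a \<times> 'a) set \<Rightarrow> nat \<Rightarrow> bool" where
  "strongly_k_arc_connected V A k \<longleftrightarrow>
     (\<forall>E. E \<subseteq> A \<and> card E + 1 \<le> k \<longrightarrow> strongly_connected V (A - E))"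

definition dpath :: "('a \<times> 'a) set \<Rightarrow> 'a list \<Rightarrow> bool" where
  "dpath A p \<longleftrightarrow> 2 \<le> length p \<and> distinct p \<and> (\<forall>i. i + 1 < length p \<longrightarrow> (p ! i, p ! (i + 1)) \<in> A)"

definition inner :: "'a list \<Rightarrow> 'a list" where
  "inner p = butlast (tl p)"

definition contains_subdivision_biK4 :: "'a set \<Rightarrow> ('a \<times> 'a) set \<Rightarrow> bool" where
  "contains_subdivision_biK4 V A \<longleftrightarrow>
     (\<exists>(b :: nat \<Rightarrow> 'a) (P :: nat \<Rightarrow> nat \<Rightarrow> 'a list).
        inj_on b {..<4} \<and> b ` {..<4} \<subseteq> V \<and>
        (\<forall>i<4. \<forall>j<4. i \<noteq> j \<longrightarrow>
            dpath A (P i j) \<and> hd (P i j) = b i \<and> last (P i j) = b j \<and>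
            set (inner (P i j)) \<inter> b ` {..<4} = {}) \<and>
        (\<forall>i<4. \<forall>j<4. \<forall>i'<4. \<forall>j'<4. i \<noteq> j \<and> i' \<noteq> j' \<and> (i, j) \<noteq> (i', j') \<longrightarrow>
            set (inner (P i j)) \<inter> set (inner (P i' j')) = {}))"

end

theory Submission
  imports Defs "HOL-Library.Sublist" "HOL-Library.Countable"
begin


definition cutset :: "('a \<times> 'a) set \<Rightarrow> 'a set \<Rightarrow> ('a \<times> 'a) set" where
  "cutset A S = {e \<in> A. fst e \<in> S \<and> snd e \<notin> S}"

definition Rk :: "('a \<times> 'a) set \<Rightarrow> nat \<Rightarrow> 'a \<Rightarrow> 'a \<Rightarrow> bool" where
  "Rk A k a b \<longleftrightarrow> (\<forall>S. a \<in> S \<longrightarrow> b \<notin> S \<longrightarrow> k \<le> card (cutset A S))"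

lemma Rk_refl: "Rk A k a a"
  unfolding Rk_def by auto

lemma Rk_trans: "Rk A k a b \<Longrightarrow> Rk A k b c \<Longrightarrow> Rk A k a c"
  unfolding Rk_def by metis

lemma Rk_two:
  assumes fin: "finite A" and loop: "\<forall>v. (v,v) \<notin> A"
    and inj: "inj_on f {..<k}" and arcs: "\<And>i. i < k \<Longrightarrow> (a, f i) \<in> A \<and> (f i, b) \<in> A"
  shows "Rk A k a b"
  unfolding Rk_def
proof (intro allI impI)
  fix S assume aS: "a \<in> S" and bS: "b \<notin> S"
  define g where "g i = (if f i \<in> S then (f i, b) else (a, f i))" for i
  have gin: "g ` {..<k} \<subseteq> cutset A S"
    using arcs aS bS by (auto simp: g_def cutset_def)
  have "inj_on g {..<k}"
  proof (rule inj_onI)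
    fix i j assume i: "i \<in> {..<k}" and j: "j \<in> {..<k}" and e: "g i = g j"
    have fi: "f i \<noteq> a" "f j \<noteq> a" using arcs[of i] arcs[of j] i j loop by auto
    have "f i = f j"
      using e fi by (auto simp: g_def split: if_splits)
    then show "i = j" using inj i j by (auto dest: inj_onD)
  qed
  then have "card (g ` {..<k}) = k" by (simp add: card_image)
  moreover have "finite (cutset A S)" using fin by (simp add: cutset_def)
  ultimately show "k \<le> card (cutset A S)" using gin by (metis card_mono)
qed

lemma Rk_in:
  assumes fin: "finite A"
    and inj: "inj_on f {..<k}" and arcs: "\<And>i. i < k \<Longrightarrow> (f i, b) \<in> A \<and> Rk A k a (f i)"
  shows "Rk A k a b"
  unfolding Rk_def
proof (intro allI impI)
  fix S assume aS: "a \<in> S" and bS: "b \<notin> S"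
  show "k \<le> card (cutset A S)"
  proof (cases "\<exists>i<k. f i \<notin> S")
    case True
    then obtain i where "i < k" "f i \<notin> S" by blast
    then show ?thesis using arcs[of i] aS unfolding Rk_def by blast
  next
    case False
    define g where "g i = (f i, b)" for i
    have gin: "g ` {..<k} \<subseteq> cutset A S"
      using arcs False bS by (auto simp: g_def cutset_def)
    have "inj_on g {..<k}" using inj by (auto simp: g_def inj_on_def)
    then have "card (g ` {..<k}) = k" by (simp add: card_image)
    moreover have "finite (cutset A S)" using fin by (simp add: cutset_def)
    ultimately show ?thesis using gin by (metis card_mono)
  qed
qed

lemma Rk_strong:
  assumes fin: "finite A" and R: "\<And>u v. u \<in> V \<Longrightarrow> v \<in> V \<Longrightarrow> Rk A k u v"
  shows "strongly_k_arc_connected V A k"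
  unfolding strongly_k_arc_connected_def strongly_connected_def
proof (intro allI impI ballI)
  fix E u v assume E: "E \<subseteq> A \<and> card E + 1 \<le> k" and u: "u \<in> V" and v: "v \<in> V"
  show "(u, v) \<in> (A - E)\<^sup>*"
  proof (rule ccontr)
    assume nv: "(u, v) \<notin> (A - E)\<^sup>*"
    define S where "S = {y. (u, y) \<in> (A - E)\<^sup>*}"
    have "u \<in> S" "v \<notin> S" using nv by (auto simp: S_def)
    then have "k \<le> card (cutset A S)" using R[OF u v] unfolding Rk_def by blast
    moreover have "cutset A S \<subseteq> E"
    proof
      fix e assume e: "e \<in> cutset A S"
      obtain x y where xy: "e = (x,y)" by (cases e)
      show "e \<in> E"
      proof (rule ccontr)
        assume "e \<notin> E"
        then have "(x,y) \<in> A - E" using e xy by (auto simp: cutset_def)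
        moreover have "(u,x) \<in> (A - E)\<^sup>*" using e xy by (auto simp: cutset_def S_def)
        ultimately have "(u,y) \<in> (A - E)\<^sup>*" by (meson rtrancl.rtrancl_into_rtrancl)
        then show False using e xy by (auto simp: cutset_def S_def)
      qed
    qed
    moreover have "finite E" using E fin by (meson finite_subset)
    ultimately have "k \<le> card E" by (meson card_mono le_trans)
    then show False using E by simp
  qed
qed

lemma cross:
  "hd p \<in> U \<Longrightarrow> x \<in> set p \<Longrightarrow> x \<notin> U \<Longrightarrow> \<exists>m. Suc m < length p \<and> p ! m \<in> U \<and> p ! Suc m \<notin> U"
proof (induction p)
  case Nil then show ?case by simp
next
  case (Cons a q)
  show ?case
  proof (cases q)
    case Nil then show ?thesis using Cons by simp
  next
    case (Cons c q')
    show ?thesis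
    proof (cases "c \<in> U")
      case False
      have "a \<in> U" using Cons.prems(1) by simp
      then show ?thesis using False \<open>q = c # q'\<close> by (intro exI[of _ 0]) simp
    next
      case True
      have "x \<in> set q" using Cons.prems by auto
      then obtain m where "Suc m < length q" "q ! m \<in> U" "q ! Suc m \<notin> U"
        using Cons.IH True \<open>q = c # q'\<close> Cons.prems by auto
      then show ?thesis by (intro exI[of _ "Suc m"]) auto
    qed
  qed
qed

lemma in_inner:
  assumes "y \<in> set p" "y \<noteq> hd p" "y \<noteq> last p"
  shows "y \<in> set (inner p)"
proof -
  obtain a q where p: "p = a # q" using assms by (cases p) auto
  have "y \<in> set q" "q \<noteq> []" using assms p by auto
  then have "q = butlast q @ [last q]" by simp
  then have "y \<in> set (butlast q)" using assms p \<open>y \<in> set q\<close>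
    by (metis Un_iff empty_set last.simps list.simps(15) set_append singletonD \<open>q \<noteq> []\<close>)
  then show ?thesis using p by (simp add: inner_def)
qed



lemma dpath_set_arcs:
  assumes "dpath A p" "x \<in> set p"
  shows "x \<in> fst ` A \<union> snd ` A"
proof -
  obtain i where i: "i < length p" "p ! i = x" using assms(2) by (meson in_set_conv_nth)
  have len: "2 \<le> length p" using assms(1) by (simp add: dpath_def)
  show ?thesis
  proof (cases "i + 1 < length p")
    case True
    then have "(p ! i, p ! (i+1)) \<in> A" using assms(1) by (simp add: dpath_def)
    then show ?thesis using i by force
  next
    case False
    then have "(i - 1) + 1 < length p" "i - 1 + 1 = i" using i len by auto
    then have "(p ! (i-1), p ! i) \<in> A" using assms(1) unfolding dpath_def by metis
    then show ?thesis using i by force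
  qed
qed

lemma transfer_k:
  fixes f :: "'a \<Rightarrow> 'b"
  assumes inj: "inj f" and sk: "strongly_k_arc_connected V A k"
  shows "strongly_k_arc_connected (f ` V) (map_prod f f ` A) k"
  unfolding strongly_k_arc_connected_def strongly_connected_def
proof (intro allI impI ballI)
  fix E' u' v' assume E': "E' \<subseteq> map_prod f f ` A \<and> card E' + 1 \<le> k"
    and u': "u' \<in> f ` V" and v': "v' \<in> f ` V"
  define E where "E = {e \<in> A. map_prod f f e \<in> E'}"
  have injm: "inj (map_prod f f)" using inj unfolding inj_def by auto
  have "map_prod f f ` E = E'"
  proof
    show "map_prod f f ` E \<subseteq> E'" by (auto simp: E_def)
    show "E' \<subseteq> map_prod f f ` E"
    proof
      fix e' assume e': "e' \<in> E'"
      have "e' \<in> map_prod f f ` A" using E' e' by auto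
      then obtain e where "e \<in> A" "e' = map_prod f f e" by (rule imageE) simp
      then show "e' \<in> map_prod f f ` E" using e' by (auto simp: E_def)
    qed
  qed
  then have "card E = card E'" using injm by (metis card_image inj_on_subset subset_UNIV)
  then have "E \<subseteq> A \<and> card E + 1 \<le> k" using E' by (auto simp: E_def)
  then have sc: "\<forall>u\<in>V. \<forall>v\<in>V. (u, v) \<in> (A - E)\<^sup>*"
    using sk unfolding strongly_k_arc_connected_def strongly_connected_def by blast
  obtain u v where uv: "u \<in> V" "v \<in> V" "u' = f u" "v' = f v" using u' v' by blast
  have "(u, v) \<in> (A - E)\<^sup>*" using sc uv by blast
  then have "(f u, f v) \<in> (map_prod f f ` A - E')\<^sup>*"
  proof (induction rule: rtrancl_induct)
    case base then show ?case by simp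
  next
    case (step y z)
    have "(f y, f z) \<in> map_prod f f ` A - E'" using step(2) by (auto simp: E_def)
    then show ?case using step(3) by (meson rtrancl.rtrancl_into_rtrancl)
  qed
  then show "(u', v') \<in> (map_prod f f ` A - E')\<^sup>*" using uv by simp
qed

lemma transfer_sub:
  fixes f :: "'a \<Rightarrow> 'b"
  assumes inj: "inj f" and sub: "contains_subdivision_biK4 (f ` V) (map_prod f f ` A)"
  shows "contains_subdivision_biK4 V A"
proof -
  define A' where "A' = map_prod f f ` A"
  obtain b :: "nat \<Rightarrow> 'b" and P :: "nat \<Rightarrow> nat \<Rightarrow> 'b list" where H: "inj_on b {..<4} \<and> b ` {..<4} \<subseteq> f ` V \<and>
        (\<forall>i<4. \<forall>j<4. i \<noteq> j \<longrightarrow>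
            dpath A' (P i j) \<and> hd (P i j) = b i \<and> last (P i j) = b j \<and>
            set (inner (P i j)) \<inter> b ` {..<4} = {}) \<and>
        (\<forall>i<4. \<forall>j<4. \<forall>i'<4. \<forall>j'<4. i \<noteq> j \<and> i' \<noteq> j' \<and> (i, j) \<noteq> (i', j') \<longrightarrow>
            set (inner (P i j)) \<inter> set (inner (P i' j')) = {})"
    using sub[unfolded contains_subdivision_biK4_def, folded A'_def] by (elim exE) (erule that)
  note b1 = conjunct1[OF H]
  note b2 = conjunct1[OF conjunct2[OF H]]
  note p1 = conjunct1[OF conjunct2[OF conjunct2[OF H]]]
  note p2 = conjunct2[OF conjunct2[OF conjunct2[OF H]]]
  define g where "g = inv f"
  have gf: "g (f x) = x" for x using inj by (simp add: g_def)
  have ginj: "inj_on g (range f)" unfolding g_def by (rule inj_on_inv_into) simp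
  have Arange: "x \<in> range f" if "x \<in> fst ` A' \<union> snd ` A'" for x using that by (auto simp: A'_def)
  have Prange: "set (P i j) \<subseteq> range f" if "i < 4" "j < 4" "i \<noteq> j" for i j
  proof
    fix x assume x: "x \<in> set (P i j)"
    have "dpath A' (P i j)" using p1 that by blast
    then have "x \<in> fst ` A' \<union> snd ` A'" using dpath_set_arcs x by metis
    then show "x \<in> range f" by (rule Arange)
  qed
  have brange: "b i \<in> range f" if "i < 4" for i using b2 that by blast
  define b0 where "b0 i = g (b i)" for i
  define P0 where "P0 i j = map g (P i j)" for i j
  have inner_map: "inner (map g p) = map g (inner p)" for p
    by (simp add: inner_def map_butlast map_tl)
  have setinner: "set (inner p) \<subseteq> set p" for p :: "'b list"
    unfolding inner_def by (cases p) (auto dest: in_set_butlastD)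
  show ?thesis
    unfolding contains_subdivision_biK4_def
  proof (intro exI[of _ b0] exI[of _ P0] conjI allI impI)
    show "inj_on b0 {..<4}"
      using b1 brange ginj unfolding b0_def inj_on_def by (metis lessThan_iff)
    show "b0 ` {..<4} \<subseteq> V" using b2 gf unfolding b0_def by auto
  next
    fix i j :: nat assume ij: "i < 4" "j < 4" "i \<noteq> j"
    have pr: "set (P i j) \<subseteq> range f" using Prange ij by blast
    have dp: "dpath A' (P i j)" using p1 ij by blast
    show "dpath A (P0 i j)"
      unfolding dpath_def P0_def
    proof (intro conjI allI impI)
      show "2 \<le> length (map g (P i j))" using dp by (simp add: dpath_def)
      show "distinct (map g (P i j))" using dp pr ginj
        by (simp add: dpath_def distinct_map inj_on_subset)
    next
      fix m assume m: "m + 1 < length (map g (P i j))"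
      then have "(P i j ! m, P i j ! (m+1)) \<in> A'" using dp by (simp add: dpath_def)
      then obtain x y where "(x,y) \<in> A" "P i j ! m = f x" "P i j ! (m+1) = f y" by (force simp: A'_def)
      then show "(map g (P i j) ! m, map g (P i j) ! (m + 1)) \<in> A" using m gf by auto
    qed
    have ne: "P i j \<noteq> []" using dp by (auto simp: dpath_def)
    show "hd (P0 i j) = b0 i" using p1 ij ne by (simp add: P0_def b0_def hd_map)
    show "last (P0 i j) = b0 j" using p1 ij ne by (simp add: P0_def b0_def last_map)
    have "set (inner (P i j)) \<inter> b ` {..<4} = {}" using p1 ij by blast
    moreover have "set (inner (P i j)) \<subseteq> range f" using pr setinner by blast
    ultimately show "set (inner (P0 i j)) \<inter> b0 ` {..<4} = {}"
    proof -
      { fix z assume z1: "z \<in> set (inner (P i j))" and z2: "g z \<in> g ` b ` {..<4}"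
        then obtain m where m: "m < 4" "g z = g (b m)" by auto
        have "z = b m" using m z1 \<open>set (inner (P i j)) \<subseteq> range f\<close> brange ginj
          by (meson inj_onD subsetD)
        then have False using z1 m \<open>set (inner (P i j)) \<inter> b ` {..<4} = {}\<close> by blast }
      then show ?thesis unfolding P0_def b0_def inner_map by (auto simp: image_image)
    qed
  next
    fix i j i' j' :: nat assume ij: "i < 4" "j < 4" "i' < 4" "j' < 4"
      "i \<noteq> j \<and> i' \<noteq> j' \<and> (i, j) \<noteq> (i', j')"
    have "set (inner (P i j)) \<inter> set (inner (P i' j')) = {}" using p2 ij by blast
    moreover have "set (inner (P i j)) \<subseteq> range f" "set (inner (P i' j')) \<subseteq> range f"
      using Prange setinner ij by blast+
    ultimately show "set (inner (P0 i j)) \<inter> set (inner (P0 i' j')) = {}"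
    proof -
      { fix z z' assume z1: "z \<in> set (inner (P i j))" and z2: "z' \<in> set (inner (P i' j'))" and e: "g z = g z'"
        then have "z = z'" using \<open>set (inner (P i j)) \<subseteq> range f\<close> \<open>set (inner (P i' j')) \<subseteq> range f\<close> ginj
          by (meson inj_onD subsetD)
        then have False using z1 z2 \<open>set (inner (P i j)) \<inter> set (inner (P i' j')) = {}\<close> by blast }
      then show ?thesis unfolding P0_def inner_map by auto
    qed
  qed
qed



definition W :: "nat \<Rightarrow> nat list set" where
  "W d = {u. length u \<le> d \<and> set u \<subseteq> {..<d}}"

definition Larc :: "nat \<Rightarrow> nat list \<Rightarrow> nat list \<Rightarrow> bool" where
  "Larc d u v \<longleftrightarrow> (length u < d \<and> (\<exists>i<d. v = u @ [i])) \<or> strict_prefix v u"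

type_synonym vt = "nat list + nat list \<times> nat list"

definition GV :: "nat \<Rightarrow> vt set" where
  "GV d = Inl ` W d \<union> Inr ` (W d \<times> W d)"

definition GA :: "nat \<Rightarrow> (vt \<times> vt) set" where
  "GA d = {(Inr (w,u), Inr (w,u')) | w u u'. w \<in> W d \<and> u \<in> W d \<and> u' \<in> W d \<and> Larc d u u'}
        \<union> {(Inr (w,u), Inl w) | w u. w \<in> W d \<and> u \<in> W d}
        \<union> {(Inl x, Inr (w,u)) | x w u. x \<in> W d \<and> w \<in> W d \<and> u \<in> W d \<and> Larc d w x}"

lemma GA_RR [simp]: "(Inr (w,u), Inr (w',u')) \<in> GA d \<longleftrightarrow> w' = w \<and> w \<in> W d \<and> u \<in> W d \<and> u' \<in> W d \<and> Larc d u u'"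
  by (auto simp: GA_def)
lemma GA_RL [simp]: "(Inr (w,u), Inl x) \<in> GA d \<longleftrightarrow> x = w \<and> w \<in> W d \<and> u \<in> W d"
  by (auto simp: GA_def)
lemma GA_LR [simp]: "(Inl x, Inr (w,u)) \<in> GA d \<longleftrightarrow> x \<in> W d \<and> w \<in> W d \<and> u \<in> W d \<and> Larc d w x"
  by (auto simp: GA_def)
lemma GA_LL [simp]: "(Inl x, Inl y) \<notin> GA d"
  by (auto simp: GA_def)

lemma finite_W: "finite (W d)"
proof -
  have "W d = {xs. set xs \<subseteq> {..<d} \<and> length xs \<le> d}" by (auto simp: W_def)
  then show ?thesis using finite_lists_length_le[of "{..<d}" d] by simp
qed

lemma GA_sub: "GA d \<subseteq> GV d \<times> GV d"
  by (auto simp: GA_def GV_def)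

lemma finite_GV: "finite (GV d)"
  using finite_W by (simp add: GV_def)

lemma finite_GA: "finite (GA d)"
  using GA_sub finite_GV by (meson finite_SigmaI finite_subset)

lemma Larc_irrefl: "\<not> Larc d u u"
  by (auto simp: Larc_def)

lemma GA_loop: "(v, v) \<notin> GA d"
  by (cases v) (auto simp: Larc_irrefl)

lemma digraph_G: "digraph (GV d) (GA d)"
  unfolding digraph_def using finite_GV GA_sub GA_loop by blast

definition fam :: "nat \<Rightarrow> nat list \<Rightarrow> nat \<Rightarrow> nat list" where
  "fam d u i = (if length u < d then u @ [i] else take i u)"

lemma fam_W: "u \<in> W d \<Longrightarrow> i < d \<Longrightarrow> fam d u i \<in> W d"
  by (auto simp: fam_def W_def dest: in_set_takeD)

lemma fam_Larc: "u \<in> W d \<Longrightarrow> i < d \<Longrightarrow> Larc d u (fam d u i)"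
proof -
  assume u: "u \<in> W d" and i: "i < d"
  show ?thesis
  proof (cases "length u < d")
    case True then show ?thesis using i by (auto simp: fam_def Larc_def)
  next
    case False
    then have "length u = d" using u by (auto simp: W_def)
    then have "strict_prefix (take i u) u" using i
    proof -
      have "prefix (take i u) u" by (rule take_is_prefix)
      moreover have "take i u \<noteq> u" using i \<open>length u = d\<close>
        by (metis length_take min.absorb4 nat_less_le)
      ultimately show ?thesis by (simp add: strict_prefix_def)
    qed
    then show ?thesis using False by (simp add: fam_def Larc_def)
  qed
qed

lemma fam_inj: "u \<in> W d \<Longrightarrow> inj_on (fam d u) {..<d}"
proof (cases "length u < d")
  case True then show ?thesis by (auto simp: fam_def inj_on_def)
next
  case False
  assume "u \<in> W d"
  then have "length u = d" using False by (auto simp: W_def)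
  show ?thesis unfolding inj_on_def
  proof (intro ballI impI)
    fix x y assume x: "x \<in> {..<d}" and y: "y \<in> {..<d}" and e: "fam d u x = fam d u y"
    then have "take x u = take y u" using False by (simp add: fam_def)
    then have "length (take x u) = length (take y u)" by simp
    then show "x = y" using x y \<open>length u = d\<close> by simp
  qed
qed

lemma singleton_W: "i < d \<Longrightarrow> [i] \<in> W d"
  by (auto simp: W_def)

lemma Nil_W: "[] \<in> W d" by (simp add: W_def)

context
  fixes k :: nat
begin

abbreviation "dd \<equiv> Suc k"

lemma R_piece: "w \<in> W dd \<Longrightarrow> u \<in> W dd \<Longrightarrow> Rk (GA dd) k (Inr (w,u)) (Inl w)"
  apply (rule Rk_two[where f = "\<lambda>i. Inr (w, fam dd u i)"])
     apply (rule finite_GA)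
    apply (rule allI, rule GA_loop)
   apply (rule inj_onI) using fam_inj[of u dd] apply (auto simp: inj_on_def)[1]
  using fam_W fam_Larc by auto

lemma R_NN: "x \<in> W dd \<Longrightarrow> w \<in> W dd \<Longrightarrow> Larc dd w x \<Longrightarrow> Rk (GA dd) k (Inl x) (Inl w)"
  apply (rule Rk_two[where f = "\<lambda>i. Inr (w, [i])"])
     apply (rule finite_GA)
    apply (rule allI, rule GA_loop)
   apply (auto simp: inj_on_def)[1]
  using singleton_W by auto

lemma R_to_root: "x \<in> W dd \<Longrightarrow> Rk (GA dd) k (Inl x) (Inl [])"
proof (induction x rule: rev_induct)
  case Nil show ?case by (rule Rk_refl)
next
  case (snoc a y)
  have y: "y \<in> W dd" "length y < dd" "a < dd" using snoc.prems by (auto simp: W_def)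
  have "Larc dd y (y @ [a])" using y by (auto simp: Larc_def)
  then have "Rk (GA dd) k (Inl (y @ [a])) (Inl y)" using R_NN snoc.prems y by blast
  moreover have "Rk (GA dd) k (Inl y) (Inl [])" using snoc.IH y by blast
  ultimately show ?case by (rule Rk_trans)
qed

lemma R_from_root: "w \<in> W dd \<Longrightarrow> Rk (GA dd) k (Inl []) (Inl w)"
proof (cases "w = []")
  case True then show ?thesis by (simp add: Rk_refl)
next
  case False
  assume w: "w \<in> W dd"
  have "Larc dd w []" using False by (simp add: Larc_def strict_prefix_def)
  then show ?thesis using R_NN w Nil_W by blast
qed

lemma R_root_piece: "w \<in> W dd \<Longrightarrow> u \<in> W dd \<Longrightarrow> Rk (GA dd) k (Inl []) (Inr (w,u))"
  apply (rule Rk_in[where f = "\<lambda>i. Inl (fam dd w i)"])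
    apply (rule finite_GA)
   apply (rule inj_onI) using fam_inj[of w dd] apply (auto simp: inj_on_def)[1]
  using fam_W fam_Larc R_from_root by auto

lemma R_all: "a \<in> GV dd \<Longrightarrow> c \<in> GV dd \<Longrightarrow> Rk (GA dd) k a c"
proof -
  have to: "Rk (GA dd) k a (Inl [])" if "a \<in> GV dd" for a
  proof -
    { fix x assume "a = Inl x" "x \<in> W dd" then have ?thesis using R_to_root by blast }
    moreover
    { fix w u assume "a = Inr (w,u)" "w \<in> W dd" "u \<in> W dd"
      then have ?thesis using Rk_trans[OF R_piece R_to_root] by blast }
    ultimately show ?thesis using that by (auto simp: GV_def)
  qed
  have fr: "Rk (GA dd) k (Inl []) c" if "c \<in> GV dd" for c
    using that R_from_root R_root_piece by (auto simp: GV_def)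
  assume "a \<in> GV dd" "c \<in> GV dd"
  then show ?thesis using Rk_trans[OF to fr] by blast
qed

lemma strong_G: "strongly_k_arc_connected (GV dd) (GA dd) k"
  by (rule Rk_strong[OF finite_GA R_all])

end



lemma Larc_cross:
  assumes "Larc d w z" "prefix (c @ [a]) z" "\<not> prefix (c @ [a]) w"
  shows "z = c @ [a] \<and> w = c"
proof -
  { assume "strict_prefix z w"
    then have "prefix (c @ [a]) w" using assms(2)
      by (meson prefix_order.trans strict_prefix_def)
    then have False using assms(3) by simp }
  then obtain i where "z = w @ [i]" using assms(1) by (auto simp: Larc_def)
  then show ?thesis using assms(2,3) by auto
qed

lemma child_prefix: "prefix c x \<Longrightarrow> c \<noteq> x \<Longrightarrow> prefix (c @ [x ! length c]) x"
proof -
  assume "prefix c x" "c \<noteq> x"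
  then obtain r where x: "x = c @ r" and "r \<noteq> []" by (auto simp: prefix_def)
  then obtain r0 rs where "r = r0 # rs" by (cases r) auto
  then show ?thesis using x by (simp add: prefix_def)
qed

lemma prefix_len: "prefix c x \<Longrightarrow> length c \<le> length x"
  by (simp add: prefix_length_le)

lemma arith_aux: "1 \<le> (a::nat) \<Longrightarrow> 1 \<le> b \<Longrightarrow> a + b \<le> a * b + 1"
  by (cases a; cases b) auto

lemma deepest:
  fixes ys :: "nat \<Rightarrow> nat list" and I :: "nat set"
  assumes "i0 \<in> I"
  shows "\<exists>c. (\<forall>i\<in>I. prefix c (ys i)) \<and> (\<forall>c'. (\<forall>i\<in>I. prefix c' (ys i)) \<longrightarrow> length c' \<le> length c)"
proof -
  define Q where "Q n = (\<exists>c. length c = n \<and> (\<forall>i\<in>I. prefix c (ys i)))" for n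
  have "Q 0" by (auto simp: Q_def)
  moreover have "\<forall>n. Q n \<longrightarrow> n \<le> length (ys i0)"
    using assms by (auto simp: Q_def dest: prefix_len)
  ultimately obtain n where "Q n" "\<forall>m. Q m \<longrightarrow> m \<le> n"
    using Nat.ex_has_greatest_nat[of Q 0 "length (ys i0)"] by blast
  then show ?thesis unfolding Q_def by blast
qed

lemma third_idx: "(i::nat) < 4 \<Longrightarrow> j < 4 \<Longrightarrow> \<exists>m<4. m \<noteq> i \<and> m \<noteq> j"
  by (rule exI[of _ "if i \<noteq> 0 \<and> j \<noteq> 0 then 0 else if i \<noteq> 1 \<and> j \<noteq> 1 then 1 else 2"]) auto

locale sub4 =
  fixes A :: "('v \<times> 'v) set" and b :: "nat \<Rightarrow> 'v" and P :: "nat \<Rightarrow> nat \<Rightarrow> 'v list"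
  assumes binj: "inj_on b {..<4}"
  and pth: "\<And>i j. i < 4 \<Longrightarrow> j < 4 \<Longrightarrow> i \<noteq> j \<Longrightarrow> dpath A (P i j) \<and> hd (P i j) = b i \<and>
              last (P i j) = b j \<and> set (inner (P i j)) \<inter> b ` {..<4} = {}"
  and disj: "\<And>i j i' j'. i < 4 \<Longrightarrow> j < 4 \<Longrightarrow> i' < 4 \<Longrightarrow> j' < 4 \<Longrightarrow> i \<noteq> j \<Longrightarrow> i' \<noteq> j' \<Longrightarrow>
              (i, j) \<noteq> (i', j') \<Longrightarrow> set (inner (P i j)) \<inter> set (inner (P i' j')) = {}"
begin

lemma bneq: "i < 4 \<Longrightarrow> j < 4 \<Longrightarrow> i \<noteq> j \<Longrightarrow> b i \<noteq> b j"
  using binj by (auto simp: inj_on_def)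

lemma inner_pair: "x \<in> set (inner (P i j)) \<Longrightarrow> x \<in> set (inner (P i' j')) \<Longrightarrow> i < 4 \<Longrightarrow> j < 4 \<Longrightarrow>
   i' < 4 \<Longrightarrow> j' < 4 \<Longrightarrow> i \<noteq> j \<Longrightarrow> i' \<noteq> j' \<Longrightarrow> i = i' \<and> j = j'"
  using disj by blast

lemma inner_notb: "x \<in> set (inner (P i j)) \<Longrightarrow> i < 4 \<Longrightarrow> j < 4 \<Longrightarrow> i \<noteq> j \<Longrightarrow> m < 4 \<Longrightarrow> x \<noteq> b m"
  using pth by blast

lemma to_inner: "g \<in> set (P i j) \<Longrightarrow> g \<noteq> b i \<Longrightarrow> g \<noteq> b j \<Longrightarrow> i < 4 \<Longrightarrow> j < 4 \<Longrightarrow> i \<noteq> j \<Longrightarrow>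
   g \<in> set (inner (P i j))"
  using in_inner pth by metis

lemma ne: "i < 4 \<Longrightarrow> j < 4 \<Longrightarrow> i \<noteq> j \<Longrightarrow> P i j \<noteq> []"
  using pth[of i j] by (auto simp: dpath_def)

lemma last_in: "i < 4 \<Longrightarrow> j < 4 \<Longrightarrow> i \<noteq> j \<Longrightarrow> b j \<in> set (P i j)"
  using pth[of i j] ne[of i j] by (metis last_in_set)

lemma crossP:
  assumes "i < 4" "j < 4" "i \<noteq> j" "b i \<in> U" "x \<in> set (P i j)" "x \<notin> U"
  shows "\<exists>m. P i j ! m \<in> U \<and> P i j ! Suc m \<notin> U \<and> (P i j ! m, P i j ! Suc m) \<in> A \<and>
             P i j ! m \<in> set (P i j) \<and> P i j ! Suc m \<in> set (P i j)"
proof -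
  have "hd (P i j) \<in> U" using assms pth by simp
  then obtain m where m: "Suc m < length (P i j)" "P i j ! m \<in> U" "P i j ! Suc m \<notin> U"
    using cross assms by metis
  have "(P i j ! m, P i j ! Suc m) \<in> A" using pth[OF assms(1-3)] m(1) by (simp add: dpath_def)
  then show ?thesis using m by (meson Suc_lessD nth_mem)
qed

lemma gate_mem:
  assumes g: "\<And>x y. (x, y) \<in> A \<Longrightarrow> x \<in> U \<Longrightarrow> y \<notin> U \<Longrightarrow> x = gg \<or> y = gg"
    and "i < 4" "j < 4" "i \<noteq> j" "b i \<in> U" "b j \<notin> U"
  shows "gg \<in> set (P i j)"
proof -
  obtain m where "P i j ! m \<in> U" "P i j ! Suc m \<notin> U" "(P i j ! m, P i j ! Suc m) \<in> A"
     "P i j ! m \<in> set (P i j)" "P i j ! Suc m \<in> set (P i j)"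
    using crossP[OF assms(2-5) last_in[OF assms(2-4)] assms(6)] by blast
  then show ?thesis using g by metis
qed

lemma uniq_start:
  assumes "X \<in> set (P i j)" "X \<in> set (P i' j')" "X \<noteq> b i" "X \<noteq> b i'"
    "i < 4" "j < 4" "i' < 4" "j' < 4" "i \<noteq> j" "i' \<noteq> j'"
  shows "(i = i' \<and> j = j') \<or> j = j'"
proof (cases "X = b j")
  case True
  show ?thesis
  proof (cases "X = b j'")
    case True then show ?thesis using \<open>X = b j\<close> bneq assms by metis
  next
    case False
    then have "X \<in> set (inner (P i' j'))" using assms to_inner by blast
    then show ?thesis using inner_notb True assms by metis
  qed
next
  case False
  then have X1: "X \<in> set (inner (P i j))" using assms to_inner by blast
  show ?thesis
  proof (cases "X = b j'")
    case True then show ?thesis using X1 inner_notb assms by metis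
  next
    case False
    then have "X \<in> set (inner (P i' j'))" using assms to_inner by blast
    then show ?thesis using X1 inner_pair assms by blast
  qed
qed

lemma uniq_end:
  assumes "X \<in> set (P i j)" "X \<in> set (P i' j')" "X \<noteq> b j" "X \<noteq> b j'"
    "i < 4" "j < 4" "i' < 4" "j' < 4" "i \<noteq> j" "i' \<noteq> j'"
  shows "(i = i' \<and> j = j') \<or> i = i'"
proof (cases "X = b i")
  case True
  show ?thesis
  proof (cases "X = b i'")
    case True then show ?thesis using \<open>X = b i\<close> bneq assms by metis
  next
    case False
    then have "X \<in> set (inner (P i' j'))" using assms to_inner by blast
    then show ?thesis using inner_notb True assms by metis
  qed
next
  case False
  then have X1: "X \<in> set (inner (P i j))" using assms to_inner by blast
  show ?thesis
  proof (cases "X = b i'")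
    case True then show ?thesis using X1 inner_notb assms by metis
  next
    case False
    then have "X \<in> set (inner (P i' j'))" using assms to_inner by blast
    then show ?thesis using X1 inner_pair assms by blast
  qed
qed

end



locale sub4G = sub4 "GA d" b P for d :: nat and b :: "nat \<Rightarrow> vt" and P
begin

lemma no_piece:
  assumes i0: "i0 < 4" and bi0: "b i0 = Inr (w, y0)"
  shows False
proof -
  define Tw where "Tw = range (\<lambda>u. Inr (w,u) :: vt)"
  define n where "n = (Inl w :: vt)"
  have nT: "n \<notin> Tw" by (auto simp: Tw_def n_def)
  have i0T: "b i0 \<in> Tw" using bi0 by (auto simp: Tw_def)
  have gT: "x = n \<or> y = n" if h: "(x, y) \<in> GA d" "x \<in> Tw" "y \<notin> Tw" for x y
  proof -
    obtain u where x: "x = Inr (w,u)" using h(2) by (auto simp: Tw_def)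
    show ?thesis
    proof (cases y)
      case (Inl z) then show ?thesis using h x by (simp add: n_def)
    next
      case (Inr p) then show ?thesis using h x by (cases p) (auto simp: Tw_def)
    qed
  qed
  have out_n: "b j = n" if j: "j < 4" "b j \<notin> Tw" for j
  proof (rule ccontr)
    assume bjn: "b j \<noteq> n"
    have ij: "i0 \<noteq> j" using i0T j by auto
    have "n \<in> set (P i0 j)" using gate_mem[OF gT i0 j(1) ij i0T j(2)] .
    then have n1: "n \<in> set (inner (P i0 j))"
      using to_inner[of n i0 j] i0T nT bjn i0 j ij by auto
    obtain m where m: "m < 4" "m \<noteq> i0" "m \<noteq> j" using third_idx[OF i0 j(1)] by blast
    show False
    proof (cases "b m \<in> Tw")
      case True
      have "n \<in> set (P m j)" using gate_mem[OF gT m(1) j(1) m(3) True j(2)] .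
      then have "n \<in> set (inner (P m j))"
        using to_inner[of n m j] True nT bjn m j by auto
      then show False using inner_pair[OF n1] m i0 j ij by blast
    next
      case False
      have n2: "n \<in> set (P i0 m)" using gate_mem[OF gT i0 m(1) m(2)[symmetric] i0T False] .
      show False
      proof (cases "b m = n")
        case True then show False using n1 inner_notb[of n i0 j m] i0 j ij m by auto
      next
        case False
        then have "n \<in> set (inner (P i0 m))"
          using to_inner[of n i0 m] n2 i0T nT m i0 by auto
        then show False using inner_pair[OF n1] m i0 j ij by blast
      qed
    qed
  qed
  have stay_or: "set (P i j) \<subseteq> Tw \<or> n \<in> set (inner (P i j))"
    if ij: "i < 4" "j < 4" "i \<noteq> j" "b i \<in> Tw" "b j \<in> Tw" for i j
  proof (rule disjCI)
    assume "\<not> n \<in> set (inner (P i j))"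
    show "set (P i j) \<subseteq> Tw"
    proof (rule ccontr)
      assume "\<not> set (P i j) \<subseteq> Tw"
      then obtain x where "x \<in> set (P i j)" "x \<notin> Tw" by blast
      then obtain m where "P i j ! m \<in> Tw" "P i j ! Suc m \<notin> Tw" "(P i j ! m, P i j ! Suc m) \<in> GA d"
        "P i j ! Suc m \<in> set (P i j)"
        using crossP[OF ij(1-4)] by blast
      then have "n \<in> set (P i j)" using gT nT by metis
      then have "n \<in> set (inner (P i j))" using to_inner[of n i j] ij nT by auto
      then show False using \<open>\<not> n \<in> set (inner (P i j))\<close> by blast
    qed
  qed
  define I where "I = {i. i < 4 \<and> b i \<in> Tw}"
  define Ou where "Ou = {i. i < 4 \<and> b i \<notin> Tw}"
  have finI: "finite I" "finite Ou" by (auto simp: I_def Ou_def)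
  have IO: "I \<union> Ou = {..<4}" "I \<inter> Ou = {}" by (auto simp: I_def Ou_def)
  have cardIO: "card I + card Ou = 4"
    using card_Un_disjoint[OF finI IO(2)] IO(1) by simp
  have cardO: "card Ou \<le> 1"
  proof -
    have "\<forall>x\<in>Ou. \<forall>y\<in>Ou. x = y"
      using out_n binj by (auto simp: Ou_def inj_on_def)
    then show ?thesis using finI card_le_Suc0_iff_eq by auto
  qed
  have O1: "n \<in> b ` {..<4}" if h1: "card Ou = 1"
  proof -
    obtain o1 where "Ou = {o1}" using h1 card_1_singletonE by blast
    then have "o1 < 4" "b o1 = n" using out_n by (auto simp: Ou_def)
    then show ?thesis by blast
  qed
  define y where "y i = snd (projr (b i))" for i
  have bI: "b i = Inr (w, y i)" if "i \<in> I" for i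
    using that by (auto simp: I_def Tw_def y_def)
  have yinj: "inj_on y I"
  proof (rule inj_onI)
    fix i j assume "i \<in> I" "j \<in> I" "y i = y j"
    then have "b i = b j" using bI by metis
    then show "i = j" using binj \<open>i \<in> I\<close> \<open>j \<in> I\<close> by (auto simp: I_def inj_on_def)
  qed
  have i0I: "i0 \<in> I" using i0 i0T by (simp add: I_def)
  obtain c where c: "\<forall>i\<in>I. prefix c (y i)"
    and cmax: "\<forall>c'. (\<forall>i\<in>I. prefix c' (y i)) \<longrightarrow> length c' \<le> length c"
    using deepest[OF i0I] by blast
  have cardI: "3 \<le> card I" using cardIO cardO by linarith
  obtain j1 where j1: "j1 \<in> I" "y j1 \<noteq> c"
  proof -
    have "\<not> (\<forall>x\<in>I. \<forall>z\<in>I. x = z)"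
    proof
      assume "\<forall>x\<in>I. \<forall>z\<in>I. x = z"
      then have "card I \<le> 1" using finI card_le_Suc0_iff_eq by auto
      then show False using cardI by simp
    qed
    then obtain i1 i2 where "i1 \<in> I" "i2 \<in> I" "i1 \<noteq> i2" by blast
    then have "y i1 \<noteq> y i2" using yinj by (auto simp: inj_on_def)
    then show ?thesis using that \<open>i1 \<in> I\<close> \<open>i2 \<in> I\<close> by metis
  qed
  define c' where "c' = c @ [y j1 ! length c]"
  have pj1: "prefix c' (y j1)" unfolding c'_def using c j1 by (intro child_prefix) auto
  have notall: "\<exists>i\<in>I. \<not> prefix c' (y i)"
  proof (rule ccontr)
    assume "\<not> (\<exists>i\<in>I. \<not> prefix c' (y i))"
    then have "length c' \<le> length c" using cmax by blast
    then show False by (simp add: c'_def)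
  qed
  define K where "K = {i \<in> I. \<not> prefix c' (y i)}"
  define J where "J = {i \<in> I. prefix c' (y i)}"
  have KJ: "K \<union> J = I" "K \<inter> J = {}" by (auto simp: K_def J_def)
  have finKJ: "finite K" "finite J" using finI by (auto simp: K_def J_def)
  have cardKJ: "card K + card J = card I" using card_Un_disjoint[OF finKJ KJ(2)] KJ(1) by simp
  have Kne: "1 \<le> card K" using notall finKJ by (auto simp: K_def card_gt_0_iff Suc_le_eq)
  have Jne: "1 \<le> card J" using pj1 j1 finKJ by (auto simp: J_def card_gt_0_iff Suc_le_eq)
  have Iidx: "i < 4" "b i \<in> Tw" if "i \<in> I" for i using that by (auto simp: I_def)
  have KJneq: "i \<noteq> j" if "i \<in> K" "j \<in> J" for i j using that by (auto simp: K_def J_def)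
  have not_c'_c: "\<not> prefix c' c" by (auto simp: c'_def dest: prefix_len)
  have enter: "Inr (w,c) \<in> set (P i j) \<and> Inr (w,c') \<in> set (P i j)"
    if ij: "i \<in> K" "j \<in> J" "set (P i j) \<subseteq> Tw" for i j
  proof -
    define U where "U = {v :: vt. \<not> (\<exists>u. v = Inr (w,u) \<and> prefix c' u)}"
    have iI: "i \<in> I" "j \<in> I" using ij by (auto simp: K_def J_def)
    have "b i \<in> U" using ij(1) bI iI by (auto simp: U_def K_def)
    moreover have "b j \<notin> U" using ij(2) bI iI by (auto simp: U_def J_def)
    ultimately obtain m where m: "P i j ! m \<in> U" "P i j ! Suc m \<notin> U"
      "(P i j ! m, P i j ! Suc m) \<in> GA d" "P i j ! m \<in> set (P i j)" "P i j ! Suc m \<in> set (P i j)"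
      using crossP[of i j U "b j"] Iidx iI KJneq ij last_in by metis
    obtain u where u: "P i j ! m = Inr (w,u)" using m(4) ij(3) by (auto simp: Tw_def)
    obtain u' where u': "P i j ! Suc m = Inr (w,u')" using m(5) ij(3) by (auto simp: Tw_def)
    have "Larc d u u'" using m(3) u u' by simp
    moreover have "prefix c' u'" "\<not> prefix c' u" using m(1,2) u u' by (auto simp: U_def)
    ultimately have "u' = c' \<and> u = c" using Larc_cross unfolding c'_def by blast
    then show ?thesis using m(4,5) u u' by auto
  qed
  have uniqS: "i = i' \<and> j = j'"
    if ij: "i \<in> K" "j \<in> J" "i' \<in> K" "j' \<in> J" "set (P i j) \<subseteq> Tw" "set (P i' j') \<subseteq> Tw"
    for i j i' j'
  proof -
    have iI: "i \<in> I" "j \<in> I" "i' \<in> I" "j' \<in> I" using ij by (auto simp: K_def J_def)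
    have idx: "i < 4" "j < 4" "i' < 4" "j' < 4" "i \<noteq> j" "i' \<noteq> j'"
      using iI Iidx KJneq ij by auto
    have e1: "Inr (w,c) \<in> set (P i j)" "Inr (w,c') \<in> set (P i j)" using enter ij by auto
    have e2: "Inr (w,c) \<in> set (P i' j')" "Inr (w,c') \<in> set (P i' j')" using enter ij by auto
    have "Inr (w,c') \<noteq> b i" "Inr (w,c') \<noteq> b i'"
      using ij iI by (auto simp: K_def dest!: bI)
    then have A1: "(i = i' \<and> j = j') \<or> j = j'" using uniq_start[OF e1(2) e2(2)] idx by blast
    have "Inr (w,c) \<noteq> b j" "Inr (w,c) \<noteq> b j'"
      using ij iI not_c'_c by (auto simp: J_def dest!: bI)
    then have A2: "(i = i' \<and> j = j') \<or> i = i'" using uniq_end[OF e1(1) e2(1)] idx by blast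
    show ?thesis using A1 A2 by blast
  qed
  define Q where "Q = K \<times> J"
  define S where "S = {q \<in> Q. set (P (fst q) (snd q)) \<subseteq> Tw}"
  define L where "L = {q \<in> Q. n \<in> set (inner (P (fst q) (snd q)))}"
  have finQ: "finite Q" "finite S" "finite L" using finKJ by (auto simp: Q_def S_def L_def)
  have QSL: "Q \<subseteq> S \<union> L"
  proof
    fix q assume q: "q \<in> Q"
    then have "fst q \<in> K" "snd q \<in> J" by (auto simp: Q_def)
    then have "fst q \<in> I" "snd q \<in> I" "fst q \<noteq> snd q" using KJneq by (auto simp: K_def J_def)
    then show "q \<in> S \<union> L" using stay_or[of "fst q" "snd q"] Iidx q by (auto simp: S_def L_def)
  qed
  have cardS: "card S \<le> 1"
  proof -
    have "\<forall>x\<in>S. \<forall>z\<in>S. x = z"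
      using uniqS by (auto simp: S_def Q_def)
    then show ?thesis using finQ card_le_Suc0_iff_eq by auto
  qed
  have cardL: "card L \<le> 1"
  proof -
    have "\<forall>x\<in>L. \<forall>z\<in>L. x = z"
    proof (intro ballI)
      fix x z assume "x \<in> L" "z \<in> L"
      then have "fst x \<in> I" "snd x \<in> I" "fst z \<in> I" "snd z \<in> I" "fst x \<noteq> snd x" "fst z \<noteq> snd z"
        "n \<in> set (inner (P (fst x) (snd x)))" "n \<in> set (inner (P (fst z) (snd z)))"
        using KJneq by (auto simp: L_def Q_def K_def J_def)
      then show "x = z" using inner_pair Iidx by (metis prod_eq_iff)
    qed
    then show ?thesis using finQ card_le_Suc0_iff_eq by auto
  qed
  have L0: "L = {}" if h2: "card Ou = 1"
  proof -
    obtain m where "m < 4" "b m = n" using O1[OF h2] by blast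
    then show ?thesis using inner_notb KJneq by (auto simp: L_def Q_def K_def J_def I_def)
  qed
  have cQ: "card Q \<le> card S + card L"
    using card_mono[OF _ QSL] finQ card_Un_le[of S L] by (meson finite_UnI le_trans)
  have cQ2: "card Q = card K * card J" by (simp add: Q_def card_cartesian_product)
  have ar: "card K + card J \<le> card K * card J + 1" using arith_aux Kne Jne by blast
  show False
  proof (cases "card Ou = 1")
    case True
    then have "card L = 0" using L0 by simp
    then show False using cQ cQ2 ar cardS cardIO True cardKJ by linarith
  next
    case False
    then have "card Ou = 0" using cardO by linarith
    then show False using cQ cQ2 ar cardS cardL cardIO cardKJ by linarith
  qed
qed

end



context sub4G
begin

definition Vs :: "nat list \<Rightarrow> vt set" where
  "Vs c' = {v. (\<exists>z. v = Inl z \<and> prefix c' z) \<or> (\<exists>w u. v = Inr (w,u) \<and> prefix c' w)}"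

lemma gateV:
  assumes "(a, e) \<in> GA d" "a \<in> Vs (c0 @ [t])" "e \<notin> Vs (c0 @ [t])"
  shows "a = Inl (c0 @ [t]) \<or> e = Inl (c0 @ [t])"
proof (cases a)
  case (Inl z)
  then have pz: "prefix (c0 @ [t]) z" using assms(2) by (auto simp: Vs_def)
  show ?thesis
  proof (cases e)
    case (Inl z') then show ?thesis using assms(1) \<open>a = Inl z\<close> by simp
  next
    case (Inr p)
    obtain w u where p: "p = (w,u)" by (cases p)
    have "Larc d w z" using assms(1) Inl Inr p by simp
    moreover have "\<not> prefix (c0 @ [t]) w" using assms(3) Inr p by (auto simp: Vs_def)
    ultimately show ?thesis using Larc_cross pz Inl by blast
  qed
next
  case (Inr p)
  obtain w u where p: "p = (w,u)" by (cases p)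
  have pw: "prefix (c0 @ [t]) w" using assms(2) Inr p by (auto simp: Vs_def)
  show ?thesis
  proof (cases e)
    case (Inl z') then show ?thesis using assms Inr p pw by (auto simp: Vs_def)
  next
    case (Inr p')
    then show ?thesis using assms \<open>a = Inr p\<close> p pw by (cases p') (auto simp: Vs_def)
  qed
qed

lemma one_in:
  assumes i: "i < 4" and bi: "b i \<in> Vs (c0 @ [t])" and j: "j < 4" and bj: "b j \<notin> Vs (c0 @ [t])"
  shows "b i = Inl (c0 @ [t])"
proof (rule ccontr)
  define tau where "tau = (Inl (c0 @ [t]) :: vt)"
  assume ne: "b i \<noteq> Inl (c0 @ [t])"
  have tV: "tau \<in> Vs (c0 @ [t])" by (simp add: tau_def Vs_def)
  have g: "x = tau \<or> y = tau" if "(x, y) \<in> GA d" "x \<in> Vs (c0 @ [t])" "y \<notin> Vs (c0 @ [t])" for x y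
    using gateV that unfolding tau_def by blast
  have ij: "i \<noteq> j" using bi bj by auto
  have "tau \<in> set (P i j)" using gate_mem[OF g i j ij bi bj] .
  moreover have "tau \<noteq> b j" using tV bj by auto
  moreover have "tau \<noteq> b i" using ne by (simp add: tau_def)
  ultimately have t1: "tau \<in> set (inner (P i j))" using to_inner[of tau i j] i j ij by blast
  obtain m where m: "m < 4" "m \<noteq> i" "m \<noteq> j" using third_idx[OF i j] by blast
  have tm: "tau \<noteq> b m" using inner_notb[OF t1 i j ij m(1)] .
  show False
  proof (cases "b m \<in> Vs (c0 @ [t])")
    case True
    have "tau \<in> set (P m j)" using gate_mem[OF g m(1) j m(3) True bj] .
    then have "tau \<in> set (inner (P m j))" using to_inner[of tau m j] tm tV bj m j by auto
    then show False using inner_pair[OF t1] m i j ij by blast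
  next
    case False
    have "tau \<in> set (P i m)" using gate_mem[OF g i m(1) m(2)[symmetric] bi False] .
    then have "tau \<in> set (inner (P i m))" using to_inner[of tau i m] tm ne i m
      unfolding tau_def by auto
    then show False using inner_pair[OF t1] m i j ij by blast
  qed
qed

lemma no_all_N:
  assumes allL: "\<And>i p. i < 4 \<Longrightarrow> b i \<noteq> Inr p"
  shows False
proof -
  define x where "x i = projl (b i)" for i
  have bx: "b i = Inl (x i)" if "i < 4" for i
    using allL[OF that] unfolding x_def by (cases "b i") auto
  have xinj: "i = j" if "i < 4" "j < 4" "x i = x j" for i j
    using that bx bneq by metis
  have i0: "(0::nat) \<in> {..<4}" by simp
  obtain c where c: "\<forall>i\<in>{..<4}. prefix c (x i)"
    and cmax: "\<forall>c'. (\<forall>i\<in>{..<4}. prefix c' (x i)) \<longrightarrow> length c' \<le> length c"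
    using deepest[OF i0] by blast
  have form: "x i = c @ [x i ! length c]" if i: "i < 4" "x i \<noteq> c" for i
  proof -
    define c' where "c' = c @ [x i ! length c]"
    have pc: "prefix c' (x i)" unfolding c'_def using c i by (intro child_prefix) auto
    then have biV: "b i \<in> Vs c'" using bx[OF i(1)] by (simp add: Vs_def)
    have "\<exists>j<4. b j \<notin> Vs c'"
    proof (rule ccontr)
      assume "\<not> (\<exists>j<4. b j \<notin> Vs c')"
      then have "\<forall>j\<in>{..<4}. prefix c' (x j)" using bx by (auto simp: Vs_def)
      then have "length c' \<le> length c" using cmax by blast
      then show False by (simp add: c'_def)
    qed
    then obtain j where "j < 4" "b j \<notin> Vs c'" by blast
    then have "b i = Inl c'" using one_in[OF i(1)] biV unfolding c'_def by blast
    then show ?thesis using bx[OF i(1)] by (simp add: c'_def)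
  qed
  have crossc: "Inl c \<in> set (inner (P i1 i2))"
    if h: "i1 < 4" "i2 < 4" "i1 \<noteq> i2" "x i1 \<noteq> c" "x i2 \<noteq> c" for i1 i2
  proof -
    define c1 where "c1 = x i1"
    have c1f: "c1 = c @ [x i1 ! length c]" using form h unfolding c1_def by blast
    have c2f: "x i2 = c @ [x i2 ! length c]" using form h by blast
    have c12: "c1 \<noteq> x i2" using xinj h unfolding c1_def by metis
    define U where "U = Vs c1 \<union> range (\<lambda>u. Inr (c,u) :: vt)"
    have g: "a = Inl c \<or> e = Inl c" if ae: "(a, e) \<in> GA d" "a \<in> U" "e \<notin> U" for a e
    proof (cases "a \<in> Vs c1")
      case True
      then have eV: "e \<notin> Vs c1" using ae by (auto simp: U_def)
      have "a = Inl c1 \<or> e = Inl c1" using gateV[of a e c "x i1 ! length c"] ae(1) True eV c1f by simp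
      then have a1: "a = Inl c1" using eV by (auto simp: Vs_def)
      show ?thesis
      proof (cases e)
        case (Inl z) then show ?thesis using ae a1 by simp
      next
        case (Inr p)
        obtain w u where p: "p = (w,u)" by (cases p)
        have "Larc d w c1" using ae(1) a1 Inr p by simp
        moreover have "\<not> prefix c1 w" using eV Inr p by (auto simp: Vs_def)
        ultimately have "w = c" using Larc_cross[of d w c1 c "x i1 ! length c"] c1f by auto
        then show ?thesis using ae(3) Inr p by (auto simp: U_def)
      qed
    next
      case False
      then obtain u where a: "a = Inr (c,u)" using ae(2) by (auto simp: U_def)
      show ?thesis
      proof (cases e)
        case (Inl z) then show ?thesis using ae a by simp
      next
        case (Inr p)
        then show ?thesis using ae a by (cases p) (auto simp: U_def)
      qed
    qed
    have b1U: "b i1 \<in> U" using bx[OF h(1)] by (simp add: U_def Vs_def c1_def)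
    have pre: "\<not> prefix c1 (x i2)"
    proof
      assume "prefix c1 (x i2)"
      moreover have "length c1 = length (x i2)" using c1f c2f by (metis length_append_singleton)
      ultimately show False using c12 by (auto simp: prefix_def)
    qed
    have b2U: "b i2 \<notin> U" using bx[OF h(2)] pre by (auto simp: U_def Vs_def)
    have "Inl c \<in> set (P i1 i2)" using gate_mem[OF g h(1,2,3) b1U b2U] .
    moreover have "Inl c \<noteq> b i1" "Inl c \<noteq> b i2" using bx h by auto
    ultimately show ?thesis using to_inner h by blast
  qed
  obtain i1 i2 where ii: "i1 < 4" "i2 < 4" "i1 \<noteq> i2" "x i1 \<noteq> c" "x i2 \<noteq> c"
  proof -
    have "\<exists>i1 i2. i1 < 4 \<and> i2 < 4 \<and> i1 \<noteq> i2 \<and> x i1 \<noteq> c \<and> x i2 \<noteq> c"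
    proof (cases "x 0 = c")
      case True
      have "x 1 \<noteq> c" using True xinj[of 0 1] by auto
      moreover have "x 2 \<noteq> c" using True xinj[of 0 2] by auto
      ultimately show ?thesis by (intro exI[of _ 1] exI[of _ 2]) auto
    next
      case False
      show ?thesis
      proof (cases "x 1 = c")
        case True
        then have "x 2 \<noteq> c" using xinj[of 1 2] by auto
        then show ?thesis using False by (intro exI[of _ 0] exI[of _ 2]) auto
      next
        case F2: False
        then show ?thesis using False by (intro exI[of _ 0] exI[of _ 1]) auto
      qed
    qed
    then show ?thesis using that by blast
  qed
  have "Inl c \<in> set (inner (P i1 i2))" using crossc ii by blast
  moreover have "Inl c \<in> set (inner (P i2 i1))" using crossc ii by metis
  ultimately show False using inner_pair ii by blast
qed

end

lemma free_G: "\<not> contains_subdivision_biK4 (GV d) (GA d)"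
proof
  assume "contains_subdivision_biK4 (GV d) (GA d)"
  then obtain b :: "nat \<Rightarrow> vt" and P :: "nat \<Rightarrow> nat \<Rightarrow> vt list" where H:
    "inj_on b {..<4} \<and> b ` {..<4} \<subseteq> GV d \<and>
    (\<forall>i<4. \<forall>j<4. i \<noteq> j \<longrightarrow> dpath (GA d) (P i j) \<and> hd (P i j) = b i \<and> last (P i j) = b j \<and>
            set (inner (P i j)) \<inter> b ` {..<4} = {}) \<and>
    (\<forall>i<4. \<forall>j<4. \<forall>i'<4. \<forall>j'<4. i \<noteq> j \<and> i' \<noteq> j' \<and> (i, j) \<noteq> (i', j') \<longrightarrow>
            set (inner (P i j)) \<inter> set (inner (P i' j')) = {})"
    unfolding contains_subdivision_biK4_def by (elim exE) (erule that)
  interpret sub4G d b P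
  proof (unfold_locales)
    show "inj_on b {..<4}" using H by blast
  next
    fix i j :: nat assume "i < 4" "j < 4" "i \<noteq> j"
    then show "dpath (GA d) (P i j) \<and> hd (P i j) = b i \<and> last (P i j) = b j \<and>
      set (inner (P i j)) \<inter> b ` {..<4} = {}" using conjunct1[OF conjunct2[OF conjunct2[OF H]]] by blast
  next
    fix i j i' j' :: nat assume "i < 4" "j < 4" "i' < 4" "j' < 4" "i \<noteq> j" "i' \<noteq> j'" "(i, j) \<noteq> (i', j')"
    then show "set (inner (P i j)) \<inter> set (inner (P i' j')) = {}"
      using conjunct2[OF conjunct2[OF conjunct2[OF H]]] by blast
  qed
  show False
  proof (rule no_all_N)
    fix i p assume i: "i < (4::nat)"
    show "b i \<noteq> Inr p"
    proof
      assume "b i = Inr p"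
      then show False using no_piece i by (cases p) blast
    qed
  qed
qed


theorem proposition1p10:
  fixes k :: nat
  shows "\<exists>(V :: nat set) A. digraph V A \<and> 2 \<le> card V \<and> strongly_k_arc_connected V A k
           \<and> \<not> contains_subdivision_biK4 V A"
proof -
  define V0 where "V0 = GV (Suc k)"
  define A0 where "A0 = GA (Suc k)"
  define f where "f = (to_nat :: vt \<Rightarrow> nat)"
  have inj: "inj f" by (simp add: f_def)
  have dg: "digraph V0 A0" unfolding V0_def A0_def by (rule digraph_G)
  have "digraph (f ` V0) (map_prod f f ` A0)"
    unfolding digraph_def
  proof (intro conjI allI)
    show "finite (f ` V0)" using dg by (simp add: digraph_def)
    show "map_prod f f ` A0 \<subseteq> f ` V0 \<times> f ` V0" using dg by (auto simp: digraph_def)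
  next
    fix v
    show "(v, v) \<notin> map_prod f f ` A0"
    proof
      assume "(v, v) \<in> map_prod f f ` A0"
      then obtain x y where "(x, y) \<in> A0" "f x = v" "f y = v" by auto
      then have "x = y" using inj by (auto dest: injD)
      then show False using \<open>(x, y) \<in> A0\<close> dg by (auto simp: digraph_def)
    qed
  qed
  moreover have "2 \<le> card (f ` V0)"
  proof -
    have sub: "{Inl [], Inl [0]} \<subseteq> V0" by (auto simp: V0_def GV_def W_def)
    have "finite V0" using dg by (simp add: digraph_def)
    then have "card {Inl [] :: vt, Inl [0]} \<le> card V0" using sub card_mono by blast
    then have "2 \<le> card V0" by simp
    then show ?thesis using inj by (simp add: card_image inj_on_subset)
  qed
  moreover have "strongly_k_arc_connected (f ` V0) (map_prod f f ` A0) k"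
    using transfer_k[OF inj strong_G] unfolding V0_def A0_def .
  moreover have "\<not> contains_subdivision_biK4 (f ` V0) (map_prod f f ` A0)"
    using transfer_sub[OF inj] free_G unfolding V0_def A0_def by blast
  ultimately show ?thesis by blast
qed

end
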